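(* If $\Gamma\vdash^{n_1} t(u,x.r)(u',y.r'):\sigma$ is derivable in $\cap J$ (with $x\notin\mathrm{fv}(u')\cup\mathrm{fv}(r')$), then there exist an environment $\Sigma\sqsubseteq\Gamma$ and $n_2\le n_1$ such that $\Sigma\vdash^{n_2} t(u,x.r(u',y.r')):\sigma$ is derivable in $\cap J$.
   Context: Terms $\mathtt T_J$: $t,u,r ::= x \mid \lambda x.t \mid t(u,y.r)$ ($y$ bound in $r$), up to $\alpha$-equivalence. System $\cap J$: types $\sigma,\tau ::= \alpha \mid \mathcal M\to\sigma$, $\mathcal M=[\sigma_i]_{i\in I}$ a finite possibly empty multiset; $\sqcup$ multiset union; environments map variables to multisets, $\wedge$ pointwise union, $\Gamma;x:\mathcal M$ extension with $x\notin\mathrm{dom}\,\Gamma$; $\Sigma\sqsubseteq\Gamma$ means $\Sigma(z)\subseteq\Gamma(z)$ (multiset inclusion) for every variable $z$. $\mathrm{ch}(\mathcal M)=\mathcal M$ if $\mathcal M\ne[\,]$, $\mathrm{ch}([\,])=[\tau]$ for an arbitrary $\tau$. Rules: (var) $x:[\sigma]\vdash x:\sigma$; (abs) from $\Gamma;x:\mathcal M\vdash t:\sigma$ infer $\Gamma\vdash\lambda x.t:\mathcal M\to\sigma$; (many) from $(\Gamma_i\vdash t:\sigma_i)_{i\in I}$, $I\ne\emptyset$, infer $\wedge_i\Gamma_i\vdash t:[\sigma_i]_{i\in I}$; (app) from $\Gamma\vdash t:\mathrm{ch}([\mathcal M_i\to\tau_i]_{i\in I})$, $\Delta\vdash u:\mathrm{ch}(\sqcup_i\mathcal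 M_i)$, $\Lambda;y:[\tau_i]_{i\in I}\vdash r:\sigma$ infer $\Gamma\wedge\Delta\wedge\Lambda\vdash t(u,y.r):\sigma$. $\vdash^n$ indicates a derivation of size $n$ = number of rule instances other than (many). *)

theory Defs
  imports Main "HOL-Library.Multiset"
begin

type_synonym var = nat

(* Terms T_J (raw named terms; App t u y r is t(u,y.r), y bound in r) *)
datatype trm = Var var | Lam var trm | App trm trm var trm

fun fv :: "trm \<Rightarrow> var set" where
  "fv (Var x) = {x}"
| "fv (Lam x t) = fv t - {x}"
| "fv (App t u y r) = fv t \<union> fv u \<union> (fv r - {y})"

datatype ty = TAtom nat | Arr "ty multiset" ty

type_synonym env = "var \<Rightarrow> ty multiset"

definition env_empty :: env where "env_empty = (\<lambda>_. {#})"

definition env_union :: "env \<Rightarrow> env \<Rightarrow> env" where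
  "env_union \<Gamma> \<Delta> = (\<lambda>z. \<Gamma> z + \<Delta> z)"

definition env_sub :: "env \<Rightarrow> env \<Rightarrow> bool" where
  "env_sub \<Sigma> \<Gamma> \<longleftrightarrow> (\<forall>z. \<Sigma> z \<subseteq># \<Gamma> z)"

(* ch_rel M N : N is a possible value of ch(M) *)
definition ch_rel :: "ty multiset \<Rightarrow> ty multiset \<Rightarrow> bool" where
  "ch_rel M N \<longleftrightarrow> (M \<noteq> {#} \<and> N = M) \<or> (M = {#} \<and> (\<exists>\<tau>. N = {#\<tau>#}))"

(* has_type \<Gamma> t \<sigma> n  :  \<Gamma> \<turnstile>^n t : \<sigma>
   has_mtype \<Gamma> t M n :  \<Gamma> \<turnstile>^n t : M  (obtained by rule many)
   The size n counts all rule instances except (many). *)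
inductive has_type :: "env \<Rightarrow> trm \<Rightarrow> ty \<Rightarrow> nat \<Rightarrow> bool"
  and has_mtype :: "env \<Rightarrow> trm \<Rightarrow> ty multiset \<Rightarrow> nat \<Rightarrow> bool" where
  t_var: "has_type (env_empty(x := {#\<sigma>#})) (Var x) \<sigma> 1"
| t_abs: "has_type \<Gamma> t \<sigma> n \<Longrightarrow> has_type (\<Gamma>(x := {#})) (Lam x t) (Arr (\<Gamma> x) \<sigma>) (Suc n)"
| t_many: "xs \<noteq> [] \<Longrightarrow> \<forall>p\<in>set xs. has_type (fst p) t (fst (snd p)) (snd (snd p)) \<Longrightarrow>
     has_mtype (foldr env_union (map fst xs) env_empty) t (mset (map (fst \<circ> snd) xs))
          (sum_list (map (snd \<circ> snd) xs))"
| t_app: "has_mtype \<Gamma> t N1 n1 \<Longrightarrow> ch_rel (mset (map (\<lambda>(M, \<tau>). Arr M \<tau>) ps)) N1 \<Longrightarrow>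
     has_mtype \<Delta> u N2 n2 \<Longrightarrow> ch_rel (sum_list (map fst ps)) N2 \<Longrightarrow>
     has_type \<Lambda> r \<sigma> n3 \<Longrightarrow> \<Lambda> y = mset (map snd ps) \<Longrightarrow>
     has_type (env_union (env_union \<Gamma> \<Delta>) (\<Lambda>(y := {#}))) (App t u y r) \<sigma> (Suc (n1 + n2 + n3))"

end

theory Submission
  imports Defs
begin

lemma fold_env_at: "foldr env_union Gs env_empty z = sum_list (map (\<lambda>G. G z) Gs)"
  by (induction Gs) (auto simp: env_union_def env_empty_def)

lemma sum_list_zero: "(\<forall>p\<in>set xs. f p = ({#}::'a multiset)) \<Longrightarrow> sum_list (map f xs) = {#}"
  by (induction xs) auto

lemma relevance:
  "has_type G t s n \<Longrightarrow> z \<notin> fv t \<Longrightarrow> G z = {#}"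
  "has_mtype G t M n \<Longrightarrow> z \<notin> fv t \<Longrightarrow> G z = {#}"
proof (induction rule: has_type_has_mtype.inducts)
  case (t_var x \<sigma>)
  then show ?case by (auto simp: env_empty_def)
next
  case (t_abs \<Gamma> t \<sigma> n x)
  then show ?case by auto
next
  case (t_many xs t)
  then show ?case unfolding fold_env_at by (intro sum_list_zero) auto
next
  case (t_app \<Gamma> t N1 n1 ps \<Delta> u N2 n2 \<Lambda> r \<sigma> n3 y)
  then show ?case by (auto simp: env_union_def)
qed

lemma mtype_inv:
  assumes "has_mtype G t N n"
  shows "\<exists>xs. xs \<noteq> [] \<and> (\<forall>p\<in>set xs. has_type (fst p) t (fst (snd p)) (snd (snd p))) \<and>
     G = foldr env_union (map fst xs) env_empty \<and> N = mset (map (fst \<circ> snd) xs) \<and>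
     n = sum_list (map (snd \<circ> snd) xs)"
  using assms by (cases rule: has_mtype.cases) auto

lemma mtype_union:
  assumes "has_mtype G1 t N1 n1" "has_mtype G2 t N2 n2"
  shows "has_mtype (env_union G1 G2) t (N1 + N2) (n1 + n2)"
proof -
  obtain xs1 where x1: "xs1 \<noteq> [] \<and> (\<forall>p\<in>set xs1. has_type (fst p) t (fst (snd p)) (snd (snd p))) \<and>
     G1 = foldr env_union (map fst xs1) env_empty \<and> N1 = mset (map (fst \<circ> snd) xs1) \<and>
     n1 = sum_list (map (snd \<circ> snd) xs1)" using mtype_inv[OF assms(1)] by blast
  obtain xs2 where x2: "xs2 \<noteq> [] \<and> (\<forall>p\<in>set xs2. has_type (fst p) t (fst (snd p)) (snd (snd p))) \<and>
     G2 = foldr env_union (map fst xs2) env_empty \<and> N2 = mset (map (fst \<circ> snd) xs2) \<and>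
     n2 = sum_list (map (snd \<circ> snd) xs2)" using mtype_inv[OF assms(2)] by blast
  have "has_mtype (foldr env_union (map fst (xs1 @ xs2)) env_empty) t (mset (map (fst \<circ> snd) (xs1 @ xs2)))
          (sum_list (map (snd \<circ> snd) (xs1 @ xs2)))"
    by (rule t_many) (use x1 x2 in auto)
  moreover have "foldr env_union (map fst (xs1 @ xs2)) env_empty = env_union G1 G2"
    using x1 x2 apply (intro ext) apply (simp only: fold_env_at) by (simp add: env_union_def fold_env_at)
  ultimately show ?thesis using x1 x2 by simp
qed

lemma type_mtype:
  assumes "has_type G t s n"
  shows "has_mtype G t {#s#} n"
proof -
  have "has_mtype (foldr env_union (map fst [(G,s,n)]) env_empty) t (mset (map (fst \<circ> snd) [(G,s,n)]))
          (sum_list (map (snd \<circ> snd) [(G,s,n)]))"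
    by (rule t_many) (use assms in auto)
  moreover have "foldr env_union (map fst [(G,s,n)]) env_empty = G"
    by (auto simp: env_union_def env_empty_def)
  ultimately show ?thesis by simp
qed

lemma merge:
  assumes "has_mtype G1 t N1 n1" "ch_rel M1 N1" "has_mtype G2 t N2 n2" "ch_rel M2 N2"
  shows "\<exists>G N n. has_mtype G t N n \<and> ch_rel (M1 + M2) N \<and> env_sub G (env_union G1 G2) \<and> n \<le> n1 + n2"
proof (cases "M1 = {#}")
  case True
  show ?thesis
  proof (cases "M2 = {#}")
    case True
    then show ?thesis using \<open>M1 = {#}\<close> assms
      by (intro exI[of _ G1] exI[of _ N1] exI[of _ n1]) (auto simp: env_sub_def env_union_def ch_rel_def)
  next
    case False
    then show ?thesis using \<open>M1 = {#}\<close> assms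
      by (intro exI[of _ G2] exI[of _ N2] exI[of _ n2]) (auto simp: env_sub_def env_union_def ch_rel_def)
  qed
next
  case False
  show ?thesis
  proof (cases "M2 = {#}")
    case True
    then show ?thesis using \<open>M1 \<noteq> {#}\<close> assms
      by (intro exI[of _ G1] exI[of _ N1] exI[of _ n1]) (auto simp: env_sub_def env_union_def ch_rel_def)
  next
    case False
    then show ?thesis using \<open>M1 \<noteq> {#}\<close> assms mtype_union[OF assms(1,3)]
      by (intro exI[of _ "env_union G1 G2"] exI[of _ "N1 + N2"] exI[of _ "n1 + n2"])
         (auto simp: env_sub_def ch_rel_def)
  qed
qed

lemma app_inv:
  assumes "has_type G (App t u x r) s m"
  shows "\<exists>Gt Nt nt Du Nu nu L n3 qs. has_mtype Gt t Nt nt \<and> ch_rel (mset (map (\<lambda>(M, \<tau>). Arr M \<tau>) qs)) Nt \<and>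
     has_mtype Du u Nu nu \<and> ch_rel (sum_list (map fst qs)) Nu \<and> has_type L r s n3 \<and> L x = mset (map snd qs) \<and>
     G = env_union (env_union Gt Du) (L(x := {#})) \<and> m = Suc (nt + nu + n3)"
  using assms by (cases rule: has_type.cases) blast+

lemma list_collect:
  assumes "xs \<noteq> []" "\<forall>p\<in>set xs. has_type (fst p) (App t u x r) (fst (snd p)) (snd (snd p))"
  shows "\<exists>Gt Nt nt Du Nu nu Lr nr qs. has_mtype Gt t Nt nt \<and> ch_rel (mset (map (\<lambda>(M, \<tau>). Arr M \<tau>) qs)) Nt \<and>
     has_mtype Du u Nu nu \<and> ch_rel (sum_list (map fst qs)) Nu \<and>
     has_mtype Lr r (mset (map (fst \<circ> snd) xs)) nr \<and> Lr x = mset (map snd qs) \<and>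
     env_sub (env_union (env_union Gt Du) (Lr(x := {#}))) (foldr env_union (map fst xs) env_empty) \<and>
     nt + nu + nr < sum_list (map (snd \<circ> snd) xs)"
  using assms
proof (induction xs)
  case Nil
  then show ?case by simp
next
  case (Cons a xs)
  obtain Ga sa ma where a: "a = (Ga, sa, ma)" by (cases a) auto
  have ha: "has_type Ga (App t u x r) sa ma" using Cons.prems a by auto
  obtain Gt Nt nt Du Nu nu L n3 qs where A: "has_mtype Gt t Nt nt" "ch_rel (mset (map (\<lambda>(M, \<tau>). Arr M \<tau>) qs)) Nt"
     "has_mtype Du u Nu nu" "ch_rel (sum_list (map fst qs)) Nu" "has_type L r sa n3" "L x = mset (map snd qs)"
     "Ga = env_union (env_union Gt Du) (L(x := {#}))" "ma = Suc (nt + nu + n3)"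
    using app_inv[OF ha] by blast
  show ?case
  proof (cases "xs = []")
    case True
    show ?thesis
      apply (rule exI[of _ Gt], rule exI[of _ Nt], rule exI[of _ nt], rule exI[of _ Du], rule exI[of _ Nu],
          rule exI[of _ nu], rule exI[of _ L], rule exI[of _ n3], rule exI[of _ qs])
      using A True a type_mtype[OF A(5)]
      by (auto simp: env_sub_def env_union_def env_empty_def)
  next
    case False
    have pr: "\<forall>p\<in>set xs. has_type (fst p) (App t u x r) (fst (snd p)) (snd (snd p))" using Cons.prems by simp
    have IH: "\<exists>Gt Nt nt Du Nu nu Lr nr qs. has_mtype Gt t Nt nt \<and> ch_rel (mset (map (\<lambda>(M, \<tau>). Arr M \<tau>) qs)) Nt \<and>
     has_mtype Du u Nu nu \<and> ch_rel (sum_list (map fst qs)) Nu \<and>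
     has_mtype Lr r (mset (map (fst \<circ> snd) xs)) nr \<and> Lr x = mset (map snd qs) \<and>
     env_sub (env_union (env_union Gt Du) (Lr(x := {#}))) (foldr env_union (map fst xs) env_empty) \<and>
     nt + nu + nr < sum_list (map (snd \<circ> snd) xs)" using Cons.IH[OF False pr] .
    then obtain Gt' Nt' nt' Du' Nu' nu' Lr nr qs' where B: "has_mtype Gt' t Nt' nt'"
      "ch_rel (mset (map (\<lambda>(M, \<tau>). Arr M \<tau>) qs')) Nt'"
      "has_mtype Du' u Nu' nu'" "ch_rel (sum_list (map fst qs')) Nu'"
      "has_mtype Lr r (mset (map (fst \<circ> snd) xs)) nr" "Lr x = mset (map snd qs')"
      "env_sub (env_union (env_union Gt' Du') (Lr(x := {#}))) (foldr env_union (map fst xs) env_empty)"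
      "nt' + nu' + nr < sum_list (map (snd \<circ> snd) xs)"
      by blast
    obtain G1 N1 k1 where C1: "has_mtype G1 t N1 k1"
      "ch_rel (mset (map (\<lambda>(M, \<tau>). Arr M \<tau>) qs) + mset (map (\<lambda>(M, \<tau>). Arr M \<tau>) qs')) N1"
      "env_sub G1 (env_union Gt Gt')" "k1 \<le> nt + nt'"
      using merge[OF A(1,2) B(1,2)] by blast
    obtain G2 N2 k2 where C2: "has_mtype G2 u N2 k2"
      "ch_rel (sum_list (map fst qs) + sum_list (map fst qs')) N2"
      "env_sub G2 (env_union Du Du')" "k2 \<le> nu + nu'"
      using merge[OF A(3,4) B(3,4)] by blast
    have R: "has_mtype (env_union L Lr) r ({#sa#} + mset (map (fst \<circ> snd) xs)) (n3 + nr)"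
      using mtype_union[OF type_mtype[OF A(5)] B(5)] .
    show ?thesis
      apply (rule exI[of _ G1], rule exI[of _ N1], rule exI[of _ k1], rule exI[of _ G2], rule exI[of _ N2],
          rule exI[of _ k2], rule exI[of _ "env_union L Lr"], rule exI[of _ "n3 + nr"], rule exI[of _ "qs @ qs'"])
      using A B C1 C2 R a
    proof (intro conjI)
      show "env_sub (env_union (env_union G1 G2) ((env_union L Lr)(x := {#})))
        (foldr env_union (map fst (a # xs)) env_empty)"
        unfolding env_sub_def
      proof
        fix z
        have e1: "G1 z \<subseteq># Gt z + Gt' z" using C1(3) by (auto simp: env_sub_def env_union_def)
        have e2: "G2 z \<subseteq># Du z + Du' z" using C2(3) by (auto simp: env_sub_def env_union_def)
        have e3: "Gt' z + Du' z + (Lr(x := {#})) z \<subseteq># foldr env_union (map fst xs) env_empty z"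
          using B(7) by (auto simp: env_sub_def env_union_def)
        have "G1 z + G2 z + ((env_union L Lr)(x := {#})) z \<subseteq>#
              (Gt z + Gt' z) + (Du z + Du' z) + ((L(x := {#})) z + (Lr(x := {#})) z)"
          using e1 e2 by (auto simp: env_union_def intro!: subset_mset.add_mono)
        also have "\<dots> = (Gt z + Du z + (L(x := {#})) z) + (Gt' z + Du' z + (Lr(x := {#})) z)"
          by (simp add: algebra_simps)
        also have "\<dots> \<subseteq># Ga z + foldr env_union (map fst xs) env_empty z"
          using e3 A(7) by (auto simp: env_union_def intro!: subset_mset.add_mono)
        finally show "env_union (env_union G1 G2) ((env_union L Lr)(x := {#})) z \<subseteq>#
             foldr env_union (map fst (a # xs)) env_empty z"
          using a by (simp add: env_union_def)
      qed
    qed (auto simp: env_union_def o_def)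
  qed
qed

theorem mainTheorem14:
  assumes "has_type \<Gamma> (App (App t u x r) u' y r') \<sigma> n1"
    and "x \<notin> fv u' \<union> fv r'"
  shows "\<exists>\<Sigma> n2. env_sub \<Sigma> \<Gamma> \<and> n2 \<le> n1 \<and> has_type \<Sigma> (App t u x (App r u' y r')) \<sigma> n2"
proof -
  obtain G0 N1 n1a D1 N2 n2a L1 n3a ps where O: "has_mtype G0 (App t u x r) N1 n1a"
    "ch_rel (mset (map (\<lambda>(M, \<tau>). Arr M \<tau>) ps)) N1"
    "has_mtype D1 u' N2 n2a" "ch_rel (sum_list (map fst ps)) N2" "has_type L1 r' \<sigma> n3a"
    "L1 y = mset (map snd ps)" "\<Gamma> = env_union (env_union G0 D1) (L1(y := {#}))"
    "n1 = Suc (n1a + n2a + n3a)"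
    using app_inv[OF assms(1)] by blast
  obtain xs where X: "xs \<noteq> []" "\<forall>p\<in>set xs. has_type (fst p) (App t u x r) (fst (snd p)) (snd (snd p))"
     "G0 = foldr env_union (map fst xs) env_empty" "N1 = mset (map (fst \<circ> snd) xs)"
     "n1a = sum_list (map (snd \<circ> snd) xs)" using mtype_inv[OF O(1)] by blast
  obtain Gt Nt nt Du Nu nu Lr nr qs where C: "has_mtype Gt t Nt nt"
     "ch_rel (mset (map (\<lambda>(M, \<tau>). Arr M \<tau>) qs)) Nt"
     "has_mtype Du u Nu nu" "ch_rel (sum_list (map fst qs)) Nu"
     "has_mtype Lr r (mset (map (fst \<circ> snd) xs)) nr" "Lr x = mset (map snd qs)"
     "env_sub (env_union (env_union Gt Du) (Lr(x := {#}))) (foldr env_union (map fst xs) env_empty)"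
     "nt + nu + nr < sum_list (map (snd \<circ> snd) xs)"
    using list_collect[OF X(1,2)] by blast
  have I: "has_type (env_union (env_union Lr D1) (L1(y := {#}))) (App r u' y r') \<sigma> (Suc (nr + n2a + n3a))"
    by (rule t_app[OF C(5)[folded X(4)] O(2) O(3) O(4) O(5) O(6)])
  have D1x: "D1 x = {#}" using relevance(2)[OF O(3)] assms(2) by auto
  have L1x: "(L1(y := {#})) x = {#}" using relevance(1)[OF O(5)] assms(2) by auto
  have Ix: "(env_union (env_union Lr D1) (L1(y := {#}))) x = mset (map snd qs)"
    using C(6) D1x L1x by (simp add: env_union_def)
  have F: "has_type (env_union (env_union Gt Du) ((env_union (env_union Lr D1) (L1(y := {#})))(x := {#})))
     (App t u x (App r u' y r')) \<sigma> (Suc (nt + nu + Suc (nr + n2a + n3a)))"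
    by (rule t_app[OF C(1) C(2) C(3) C(4) I Ix])
  have S: "env_sub (env_union (env_union Gt Du) ((env_union (env_union Lr D1) (L1(y := {#})))(x := {#}))) \<Gamma>"
    unfolding env_sub_def
  proof
    fix z
    have e: "Gt z + Du z + (Lr(x := {#})) z \<subseteq># G0 z"
      using C(7) X(3) by (auto simp: env_sub_def env_union_def)
    have "(env_union (env_union Gt Du) ((env_union (env_union Lr D1) (L1(y := {#})))(x := {#}))) z
       = (Gt z + Du z + (Lr(x := {#})) z) + D1 z + (L1(y := {#})) z"
      using D1x L1x by (auto simp: env_union_def)
    also have "\<dots> \<subseteq># G0 z + D1 z + (L1(y := {#})) z"
      using e by (simp add: subset_mset.add_right_mono)
    finally show "(env_union (env_union Gt Du) ((env_union (env_union Lr D1) (L1(y := {#})))(x := {#}))) z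
       \<subseteq># \<Gamma> z" using O(7) by (simp add: env_union_def)
  qed
  show ?thesis using F S C(8) X(5) O(8) by (intro exI conjI) auto
qed

end
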